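(* Let $P,Q\in\Gamma_n$ with $P\ne Q$, and $0<r\le R$ with $r\le p_i/q_i\le R$ for all $i$. Then $$r\le\frac{F(Q\|P)}{F(P\|Q)}\le R\qquad\text{and}\qquad r\le\sqrt{\frac{G(Q\|P)}{G(P\|Q)}}\le R.$$
   Context: $\Gamma_n=\{P=(p_1,\dots,p_n): p_i>0,\ \sum_i p_i=1\}$, $n\ge2$. Relative Jensen–Shannon divergence $F(P\|Q)=\sum_i p_i\ln\frac{2p_i}{p_i+q_i}$, $F(Q\|P)=\sum_i q_i\ln\frac{2q_i}{p_i+q_i}$; relative arithmetic–geometric divergence $G(P\|Q)=\sum_i\frac{p_i+q_i}{2}\ln\frac{p_i+q_i}{2p_i}$, $G(Q\|P)=\sum_i\frac{p_i+q_i}{2}\ln\frac{p_i+q_i}{2q_i}$. *)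

theory Defs
  imports Complex_Main
begin

definition Gamma :: "nat \<Rightarrow> (nat \<Rightarrow> real) set" where
  "Gamma n = {p. (\<forall>i<n. p i > 0) \<and> (\<Sum>i<n. p i) = 1}"

definition relJS :: "nat \<Rightarrow> (nat \<Rightarrow> real) \<Rightarrow> (nat \<Rightarrow> real) \<Rightarrow> real" where
  "relJS n p q = (\<Sum>i<n. p i * ln (2 * p i / (p i + q i)))"

definition relAG :: "nat \<Rightarrow> (nat \<Rightarrow> real) \<Rightarrow> (nat \<Rightarrow> real) \<Rightarrow> real" where
  "relAG n p q = (\<Sum>i<n. (p i + q i) / 2 * ln ((p i + q i) / (2 * p i)))"

end

theory Submission imports Defs begin

lemma tangent_gen:
  fixes h h1 h2 :: "real \<Rightarrow> real"
  assumes ab: "a \<le> 1" "1 \<le> b" and t: "a \<le> t" "t \<le> b"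
  and d1: "\<And>x. a \<le> x \<Longrightarrow> x \<le> b \<Longrightarrow> (h has_real_derivative h1 x) (at x)"
  and d2: "\<And>x. a \<le> x \<Longrightarrow> x \<le> b \<Longrightarrow> (h1 has_real_derivative h2 x) (at x)"
  and nn: "\<And>x. a \<le> x \<Longrightarrow> x \<le> b \<Longrightarrow> h2 x \<ge> 0"
  shows "h t \<ge> h 1 + h1 1 * (t - 1)"
proof -
  define \<phi> where "\<phi> x = h x - h 1 - h1 1 * (x - 1)" for x
  have d\<phi>: "(\<phi> has_real_derivative (h1 x - h1 1)) (at x)" if "a \<le> x" "x \<le> b" for x
    unfolding \<phi>_def using that by (auto intro!: derivative_eq_intros d1)
  have mono: "h1 x \<le> h1 y" if "a \<le> x" "x \<le> y" "y \<le> b" for x y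
  proof (rule DERIV_nonneg_imp_nondecreasing[OF that(2)])
    fix z assume "x \<le> z" "z \<le> y"
    then show "\<exists>y. DERIV h1 z :> y \<and> y \<ge> 0" using d2 nn that by (meson order_trans)
  qed
  show ?thesis
  proof (cases "t \<ge> 1")
    case True
    have "\<phi> 1 \<le> \<phi> t"
    proof (rule DERIV_nonneg_imp_nondecreasing[OF True])
      fix z assume z: "1 \<le> z" "z \<le> t"
      show "\<exists>y. DERIV \<phi> z :> y \<and> y \<ge> 0"
        using d\<phi>[of z] mono[of 1 z] z ab t by auto
    qed
    then show ?thesis by (simp add: \<phi>_def)
  next
    case False
    have "\<phi> t \<ge> \<phi> 1"
    proof (rule DERIV_nonpos_imp_nonincreasing[of t 1 \<phi>])
      show "t \<le> 1" using False by simp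
      fix z assume z: "t \<le> z" "z \<le> 1"
      show "\<exists>y. DERIV \<phi> z :> y \<and> y \<le> 0"
        using d\<phi>[of z] mono[of z 1] z ab t by auto
    qed
    then show ?thesis by (simp add: \<phi>_def)
  qed
qed

lemma tangent_strict:
  fixes h h1 h2 :: "real \<Rightarrow> real"
  assumes ab: "a \<le> 1" "1 \<le> b" and t: "a \<le> t" "t \<le> b" "t \<noteq> 1"
  and d1: "\<And>x. a \<le> x \<Longrightarrow> x \<le> b \<Longrightarrow> (h has_real_derivative h1 x) (at x)"
  and d2: "\<And>x. a \<le> x \<Longrightarrow> x \<le> b \<Longrightarrow> (h1 has_real_derivative h2 x) (at x)"
  and nn: "\<And>x. a \<le> x \<Longrightarrow> x \<le> b \<Longrightarrow> h2 x > 0"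
  shows "h t > h 1 + h1 1 * (t - 1)"
proof -
  define \<phi> where "\<phi> x = h x - h 1 - h1 1 * (x - 1)" for x
  have d\<phi>: "(\<phi> has_real_derivative (h1 x - h1 1)) (at x)" if "a \<le> x" "x \<le> b" for x
    unfolding \<phi>_def using that by (auto intro!: derivative_eq_intros d1)
  have mono: "h1 x < h1 y" if "a \<le> x" "x < y" "y \<le> b" for x y
  proof (rule DERIV_pos_imp_increasing[OF that(2)])
    fix z assume "x \<le> z" "z \<le> y"
    then show "\<exists>y. DERIV h1 z :> y \<and> y > 0" using d2 nn that by (meson order_trans less_imp_le)
  qed
  define s where "s = (1 + t) / 2"
  show ?thesis
  proof (cases "t > 1")
    case True
    have "\<phi> 1 \<le> \<phi> s"
    proof (rule DERIV_nonneg_imp_nondecreasing[of 1 s \<phi>])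
      show "1 \<le> s" using True s_def by simp
      fix z assume z: "1 \<le> z" "z \<le> s"
      show "\<exists>y. DERIV \<phi> z :> y \<and> y \<ge> 0"
        using d\<phi>[of z] mono[of 1 z] z ab t s_def
        by (cases "z = 1") (auto intro!: exI[of _ "h1 z - h1 1"])
    qed
    also have "\<phi> s < \<phi> t"
    proof (rule DERIV_pos_imp_increasing[of s t \<phi>])
      show "s < t" using True s_def by simp
      fix z assume z: "s \<le> z" "z \<le> t"
      show "\<exists>y. DERIV \<phi> z :> y \<and> y > 0"
        using d\<phi>[of z] mono[of 1 z] z ab t s_def True by auto
    qed
    finally show ?thesis by (simp add: \<phi>_def)
  next
    case False
    then have tl: "t < 1" using t by simp
    have "\<phi> s \<ge> \<phi> 1"
    proof (rule DERIV_nonpos_imp_nonincreasing[of s 1 \<phi>])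
      show "s \<le> 1" using tl s_def by simp
      fix z assume z: "s \<le> z" "z \<le> 1"
      show "\<exists>y. DERIV \<phi> z :> y \<and> y \<le> 0"
        using d\<phi>[of z] mono[of z 1] z ab t s_def tl
        by (cases "z = 1") (auto intro!: exI[of _ "h1 z - h1 1"])
    qed
    also have "\<phi> s < \<phi> t"
    proof (rule DERIV_neg_imp_decreasing[of t s \<phi>])
      show "t < s" using tl s_def by simp
      fix z assume z: "t \<le> z" "z \<le> s"
      show "\<exists>y. DERIV \<phi> z :> y \<and> y < 0"
        using d\<phi>[of z] mono[of z 1] z ab t s_def tl by auto
    qed
    finally show ?thesis by (simp add: \<phi>_def)
  qed
qed

lemma a1: "(t::real) > 0 \<Longrightarrow> 1 / t - 1 / (1 + t) - 1 / ((1 + t) * (1 + t)) = 1 / (t * (1 + t)^2)"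
proof -
  assume "t > 0" then have "t \<noteq> 0" "1 + t \<noteq> 0" by auto
  have "t * (1+t) \<noteq> 0" "t+t*t \<noteq> 0" "1 + (t*t+t*2) \<noteq> 0" using \<open>t>0\<close> by (auto simp: add_pos_pos) (smt (verit) mult_pos_pos)+
  then show ?thesis by (simp add: divide_simps power2_eq_square add_pos_pos) (simp add: algebra_simps)?
qed
lemma a2: "(t::real) > 0 \<Longrightarrow> (1 / (1 + t) - 1 / t) * (1 + t) = 1 - (2 + t * 2) / (2 * t)"
proof -
  assume "t > 0" then have "t \<noteq> 0" "1 + t \<noteq> 0" by auto
  have "t * (1+t) \<noteq> 0" "t+t*t \<noteq> 0" "1 + (t*t+t*2) \<noteq> 0" using \<open>t>0\<close> by (auto simp: add_pos_pos) (smt (verit) mult_pos_pos)+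
  then show ?thesis by (simp add: divide_simps power2_eq_square add_pos_pos) (simp add: algebra_simps)?
qed
lemma a3: "(t::real) > 0 \<Longrightarrow> (2 / (1 + t) - 2 / t) / 4 + 1 / (2 * (t * t)) = 1 / (2 * t\<^sup>2 * (1 + t))"
proof -
  assume "t > 0" then have "t \<noteq> 0" "1 + t \<noteq> 0" by auto
  have "t * (1+t) \<noteq> 0" "t+t*t \<noteq> 0" "1 + (t*t+t*2) \<noteq> 0" using \<open>t>0\<close> by (auto simp: add_pos_pos) (smt (verit) mult_pos_pos)+
  then show ?thesis by (simp add: divide_simps power2_eq_square add_pos_pos) (simp add: algebra_simps)?
qed

definition gF :: "real \<Rightarrow> real" where "gF t = ln 2 - ln (1 + t)"
definition fF :: "real \<Rightarrow> real" where "fF t = t * (ln 2 + ln t - ln (1 + t))"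
definition kG :: "real \<Rightarrow> real" where "kG t = (1 + t) / 2 * (ln (1 + t) - ln 2)"
definition mG :: "real \<Rightarrow> real" where "mG t = (1 + t) / 2 * (ln (1 + t) - ln 2 - ln t)"

definition gF1 :: "real \<Rightarrow> real" where "gF1 t = - 1 / (1 + t)"
definition fF1 :: "real \<Rightarrow> real" where "fF1 t = ln 2 + ln t - ln (1 + t) + 1 - t / (1 + t)"
definition kG1 :: "real \<Rightarrow> real" where "kG1 t = (ln (1 + t) - ln 2) / 2 + 1 / 2"
definition mG1 :: "real \<Rightarrow> real" where "mG1 t = (ln (1 + t) - ln 2 - ln t) / 2 + 1 / 2 - (1 + t) / (2 * t)"

lemma d_gF: "t > 0 \<Longrightarrow> (gF has_real_derivative gF1 t) (at t)"
  unfolding gF_def gF1_def by (auto intro!: derivative_eq_intros simp: field_simps)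
lemma d_gF1: "t > 0 \<Longrightarrow> (gF1 has_real_derivative 1 / (1 + t)^2) (at t)"
  unfolding gF1_def apply (rule derivative_eq_intros refl | simp)+
  by (simp_all add: a1 a2 a3 power2_eq_square)
lemma d_fF: "t > 0 \<Longrightarrow> (fF has_real_derivative fF1 t) (at t)"
  unfolding fF_def fF1_def by (auto intro!: derivative_eq_intros simp: field_simps)
lemma d_fF1: "t > 0 \<Longrightarrow> (fF1 has_real_derivative 1 / (t * (1 + t)^2)) (at t)"
  unfolding fF1_def apply (rule derivative_eq_intros refl | simp)+
  by (simp_all add: a1 a2 a3 power2_eq_square)
lemma d_kG: "t > 0 \<Longrightarrow> (kG has_real_derivative kG1 t) (at t)"
  unfolding kG_def kG1_def by (auto intro!: derivative_eq_intros simp: field_simps)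
lemma d_kG1: "t > 0 \<Longrightarrow> (kG1 has_real_derivative 1 / (2 * (1 + t))) (at t)"
  unfolding kG1_def by (auto intro!: derivative_eq_intros simp: field_simps)
lemma d_mG: "t > 0 \<Longrightarrow> (mG has_real_derivative mG1 t) (at t)"
  unfolding mG_def mG1_def apply (rule derivative_eq_intros refl | simp)+
  by (simp_all add: a1 a2 a3 power2_eq_square)
lemma d_mG1: "t > 0 \<Longrightarrow> (mG1 has_real_derivative 1 / (2 * t^2 * (1 + t))) (at t)"
  unfolding mG1_def apply (rule derivative_eq_intros refl | simp)+
  by (simp_all add: a1 a2 a3 power2_eq_square)


lemma id_g: "(p::real) > 0 \<Longrightarrow> q > 0 \<Longrightarrow> q * ln (2 * q / (q + p)) = q * gF (p / q)"
proof -
  assume p: "p > 0" and q: "q > 0"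
  have e: "1 + p / q = (q + p) / q" using q by (simp add: field_simps)
  have "ln (2 * q / (q + p)) = ln 2 + ln q - ln (q + p)" using p q by (simp add: ln_div ln_mult)
  moreover have "ln (1 + p / q) = ln (q + p) - ln q" unfolding e using p q by (simp add: ln_div)
  ultimately show ?thesis unfolding gF_def by simp
qed

lemma id_f: "(p::real) > 0 \<Longrightarrow> q > 0 \<Longrightarrow> p * ln (2 * p / (p + q)) = q * fF (p / q)"
proof -
  assume p: "p > 0" and q: "q > 0"
  have e: "1 + p / q = (q + p) / q" using q by (simp add: field_simps)
  have "ln (2 * p / (p + q)) = ln 2 + ln p - ln (p + q)" using p q by (simp add: ln_div ln_mult)
  moreover have "ln (1 + p / q) = ln (q + p) - ln q" unfolding e using p q by (simp add: ln_div)
  moreover have "ln (p / q) = ln p - ln q" using p q by (simp add: ln_div)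
  ultimately show ?thesis unfolding fF_def using q by (simp add: add.commute)
qed

lemma id_k: "(p::real) > 0 \<Longrightarrow> q > 0 \<Longrightarrow> (q + p) / 2 * ln ((q + p) / (2 * q)) = q * kG (p / q)"
proof -
  assume p: "p > 0" and q: "q > 0"
  have e: "1 + p / q = (q + p) / q" using q by (simp add: field_simps)
  have "ln ((q + p) / (2 * q)) = ln (q + p) - ln 2 - ln q" using p q by (simp add: ln_div ln_mult)
  moreover have "ln (1 + p / q) = ln (q + p) - ln q" unfolding e using p q by (simp add: ln_div)
  moreover have "q * ((q + p) / q / 2) = (q + p) / 2" using q by simp
  ultimately show ?thesis unfolding kG_def e using q by simp
qed

lemma id_m: "(p::real) > 0 \<Longrightarrow> q > 0 \<Longrightarrow> (p + q) / 2 * ln ((p + q) / (2 * p)) = q * mG (p / q)"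
proof -
  assume p: "p > 0" and q: "q > 0"
  have e: "1 + p / q = (q + p) / q" using q by (simp add: field_simps)
  have "ln ((p + q) / (2 * p)) = ln (q + p) - ln 2 - ln p" using p q by (simp add: ln_div ln_mult add.commute)
  moreover have "ln (1 + p / q) = ln (q + p) - ln q" unfolding e using p q by (simp add: ln_div)
  moreover have "ln (p / q) = ln p - ln q" using p q by (simp add: ln_div)
  moreover have "q * ((q + p) / q / 2) = (p + q) / 2" using q by simp
  ultimately show ?thesis unfolding mG_def e using q by (simp add: add.commute)
qed

lemma sum_tangent:
  fixes p q :: "nat \<Rightarrow> real" and h :: "real \<Rightarrow> real"
  assumes "\<And>i. i < n \<Longrightarrow> q i > 0" "(\<Sum>i<n. p i) = (\<Sum>i<n. q i)"
    "\<And>i. i < n \<Longrightarrow> h (p i / q i) \<ge> c * (p i / q i - 1)"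
  shows "(\<Sum>i<n. q i * h (p i / q i)) \<ge> 0"
proof -
  have "(\<Sum>i<n. q i * h (p i / q i)) \<ge> (\<Sum>i<n. q i * (c * (p i / q i - 1)))"
    by (rule sum_mono) (use assms in \<open>auto intro: mult_left_mono less_imp_le\<close>)
  also have "(\<Sum>i<n. q i * (c * (p i / q i - 1))) = (\<Sum>i<n. c * (p i - q i))"
  proof (rule sum.cong)
    fix i assume "i \<in> {..<n}"
    then have "q i > 0" using assms(1) by simp
    then show "q i * (c * (p i / q i - 1)) = c * (p i - q i)" by (simp add: field_simps)
  qed simp
  also have "\<dots> = 0" using assms(2) by (simp add: sum_distrib_left[symmetric] sum_subtractf)
  finally show ?thesis by simp
qed

lemma sum_tangent_strict:
  fixes p q :: "nat \<Rightarrow> real" and h :: "real \<Rightarrow> real"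
  assumes "\<And>i. i < n \<Longrightarrow> q i > 0" "(\<Sum>i<n. p i) = (\<Sum>i<n. q i)"
    "\<And>i. i < n \<Longrightarrow> h (p i / q i) \<ge> c * (p i / q i - 1)"
    "j < n" "h (p j / q j) > c * (p j / q j - 1)"
  shows "(\<Sum>i<n. q i * h (p i / q i)) > 0"
proof -
  have "(\<Sum>i<n. q i * h (p i / q i)) > (\<Sum>i<n. q i * (c * (p i / q i - 1)))"
    by (rule sum_strict_mono_ex1) (use assms in \<open>auto intro: mult_left_mono less_imp_le\<close>)
  also have "(\<Sum>i<n. q i * (c * (p i / q i - 1))) = (\<Sum>i<n. c * (p i - q i))"
  proof (rule sum.cong)
    fix i assume "i \<in> {..<n}"
    then have "q i > 0" using assms(1) by simp
    then show "q i * (c * (p i / q i - 1)) = c * (p i - q i)" by (simp add: field_simps)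
  qed simp
  also have "\<dots> = 0" using assms(2) by (simp add: sum_distrib_left[symmetric] sum_subtractf)
  finally show ?thesis by simp
qed


theorem mainTheorem17:
  fixes n :: nat and p q :: "nat \<Rightarrow> real" and r R :: real
  assumes "n \<ge> 2"
    and "p \<in> Gamma n" and "q \<in> Gamma n"
    and "\<exists>i<n. p i \<noteq> q i"
    and "0 < r" and "r \<le> R"
    and "\<And>i. i < n \<Longrightarrow> r \<le> p i / q i \<and> p i / q i \<le> R"
  shows "r \<le> relJS n q p / relJS n p q \<and> relJS n q p / relJS n p q \<le> R
     \<and> r \<le> sqrt (relAG n q p / relAG n p q) \<and> sqrt (relAG n q p / relAG n p q) \<le> R"
proof -
  have pp: "\<And>i. i < n \<Longrightarrow> p i > 0" and sp: "(\<Sum>i<n. p i) = 1"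
    using assms(2) by (auto simp: Gamma_def)
  have qp: "\<And>i. i < n \<Longrightarrow> q i > 0" and sq: "(\<Sum>i<n. q i) = 1"
    using assms(3) by (auto simp: Gamma_def)
  have seq: "(\<Sum>i<n. p i) = (\<Sum>i<n. q i)" using sp sq by simp
  have ne: "{..<n} \<noteq> {}" using assms(1) by (simp add: lessThan_empty_iff)
  have r1: "r \<le> 1"
  proof (rule ccontr)
    assume "\<not> r \<le> 1"
    then have "\<And>i. i < n \<Longrightarrow> q i < p i"
      using assms(7) qp by (metis divide_le_eq_1_pos less_le_not_le order_trans linorder_not_le)
    then have "(\<Sum>i<n. q i) < (\<Sum>i<n. p i)"
      using ne by (intro sum_strict_mono) auto
    then show False using seq by simp
  qed
  have R1: "1 \<le> R"
  proof (rule ccontr)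
    assume "\<not> 1 \<le> R"
    then have "\<And>i. i < n \<Longrightarrow> p i < q i"
      using assms(7) qp by (metis divide_less_eq_1_pos le_less_trans linorder_not_le)
    then have "(\<Sum>i<n. p i) < (\<Sum>i<n. q i)"
      using ne by (intro sum_strict_mono) auto
    then show False using seq by simp
  qed
  obtain j where j: "j < n" "p j \<noteq> q j" using assms(4) by auto
  have tj: "p j / q j \<noteq> 1" using j qp[OF j(1)] by simp
  have tb: "r \<le> p i / q i" "p i / q i \<le> R" if "i < n" for i using assms(7)[OF that] by auto
  have tpos: "x > 0" if "r \<le> x" for x using that assms(5) by simp
  have key: "(\<Sum>i<n. q i * h (p i / q i)) \<ge> 0"
    if d1: "\<And>x. r \<le> x \<Longrightarrow> x \<le> R \<Longrightarrow> (h has_real_derivative Hd x) (at x)"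
    and d2: "\<And>x. r \<le> x \<Longrightarrow> x \<le> R \<Longrightarrow> (Hd has_real_derivative Hdd x) (at x)"
    and nn: "\<And>x. r \<le> x \<Longrightarrow> x \<le> R \<Longrightarrow> Hdd x \<ge> 0"
    and h0: "h 1 = 0"
    for h Hd Hdd :: "real \<Rightarrow> real"
  proof (rule sum_tangent[where c = "Hd 1"])
    show "\<And>i. i < n \<Longrightarrow> 0 < q i" by (rule qp)
    show "(\<Sum>i<n. p i) = (\<Sum>i<n. q i)" by (rule seq)
    fix i assume "i < n"
    from tangent_gen[OF r1 R1 tb[OF this] d1 d2 nn] h0
    show "Hd 1 * (p i / q i - 1) \<le> h (p i / q i)" by simp
  qed
  have keys: "(\<Sum>i<n. q i * h (p i / q i)) > 0"
    if d1: "\<And>x. r \<le> x \<Longrightarrow> x \<le> R \<Longrightarrow> (h has_real_derivative Hd x) (at x)"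
    and d2: "\<And>x. r \<le> x \<Longrightarrow> x \<le> R \<Longrightarrow> (Hd has_real_derivative Hdd x) (at x)"
    and nn: "\<And>x. r \<le> x \<Longrightarrow> x \<le> R \<Longrightarrow> Hdd x > 0"
    and h0: "h 1 = 0"
    for h Hd Hdd :: "real \<Rightarrow> real"
  proof (rule sum_tangent_strict[where c = "Hd 1" and j = j])
    show "\<And>i. i < n \<Longrightarrow> 0 < q i" by (rule qp)
    show "(\<Sum>i<n. p i) = (\<Sum>i<n. q i)" by (rule seq)
    show "j < n" by (rule j)
    show "Hd 1 * (p j / q j - 1) < h (p j / q j)"
      using tangent_strict[OF r1 R1 tb[OF j(1)] tj d1 d2 nn] h0 by simp
    fix i assume "i < n"
    from tangent_gen[OF r1 R1 tb[OF this] d1 d2 less_imp_le[OF nn]] h0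
    show "Hd 1 * (p i / q i - 1) \<le> h (p i / q i)" by simp
  qed
  have AF: "relJS n q p = (\<Sum>i<n. q i * gF (p i / q i))"
    unfolding relJS_def by (rule sum.cong[OF refl], rule id_g) (auto intro: pp qp)
  have BF: "relJS n p q = (\<Sum>i<n. q i * fF (p i / q i))"
    unfolding relJS_def by (rule sum.cong[OF refl], rule id_f) (auto intro: pp qp)
  have AG: "relAG n q p = (\<Sum>i<n. q i * kG (p i / q i))"
    unfolding relAG_def by (rule sum.cong[OF refl], rule id_k) (auto intro: pp qp)
  have BG: "relAG n p q = (\<Sum>i<n. q i * mG (p i / q i))"
    unfolding relAG_def by (rule sum.cong[OF refl], rule id_m) (auto intro: pp qp)
  have g1: "gF 1 = 0" "fF 1 = 0" "kG 1 = 0" "mG 1 = 0"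
    by (simp_all add: gF_def fF_def kG_def mG_def)
  have c1: "x * (1 / (x * (1 + x)^2)) = 1 / (1 + x)^2" if "x > 0" for x :: real
    using that by simp
  have c2: "x^2 * (1 / (2 * x^2 * (1 + x))) = 1 / (2 * (1 + x))" if "x > 0" for x :: real
    using that by simp
  have FL: "(\<Sum>i<n. q i * (gF (p i / q i) - r * fF (p i / q i))) \<ge> 0"
  proof (rule key[where h = "\<lambda>x. gF x - r * fF x" and Hd = "\<lambda>x. gF1 x - r * fF1 x" and Hdd = "\<lambda>x. 1 / (1 + x)^2 - r * (1 / (x * (1 + x)^2))"])
    fix x assume x: "r \<le> x" "x \<le> R"
    have "x > 0" using tpos x by simp
    then show "((\<lambda>x. gF x - r * fF x) has_real_derivative gF1 x - r * fF1 x) (at x)"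
      by (intro DERIV_diff DERIV_cmult d_gF d_fF)
    show "(( \<lambda>x. gF1 x - r * fF1 x) has_real_derivative 1 / (1 + x)^2 - r * (1 / (x * (1 + x)^2))) (at x)"
      using \<open>x > 0\<close> by (intro DERIV_diff DERIV_cmult d_gF1 d_fF1)
    have "r * (1 / (x * (1 + x)^2)) \<le> x * (1 / (x * (1 + x)^2))"
      using x \<open>x > 0\<close> by (intro mult_right_mono) auto
    then show "0 \<le> 1 / (1 + x)^2 - r * (1 / (x * (1 + x)^2))" using c1[OF \<open>x > 0\<close>] by simp
  qed (simp add: g1)
  have FU: "(\<Sum>i<n. q i * (R * fF (p i / q i) - gF (p i / q i))) \<ge> 0"
  proof (rule key[where h = "\<lambda>x. R * fF x - gF x" and Hd = "\<lambda>x. R * fF1 x - gF1 x" and Hdd = "\<lambda>x. R * (1 / (x * (1 + x)^2)) - 1 / (1 + x)^2"])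
    fix x assume x: "r \<le> x" "x \<le> R"
    have "x > 0" using tpos x by simp
    then show "((\<lambda>x. R * fF x - gF x) has_real_derivative R * fF1 x - gF1 x) (at x)"
      by (intro DERIV_diff DERIV_cmult d_gF d_fF)
    show "(( \<lambda>x. R * fF1 x - gF1 x) has_real_derivative R * (1 / (x * (1 + x)^2)) - 1 / (1 + x)^2) (at x)"
      using \<open>x > 0\<close> by (intro DERIV_diff DERIV_cmult d_gF1 d_fF1)
    have "x * (1 / (x * (1 + x)^2)) \<le> R * (1 / (x * (1 + x)^2))"
      using x \<open>x > 0\<close> by (intro mult_right_mono) auto
    then show "0 \<le> R * (1 / (x * (1 + x)^2)) - 1 / (1 + x)^2" using c1[OF \<open>x > 0\<close>] by simp
  qed (simp add: g1)
  have FP: "(\<Sum>i<n. q i * fF (p i / q i)) > 0"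
  proof (rule keys[where h = "fF" and Hd = fF1 and Hdd = "\<lambda>x. 1 / (x * (1 + x)^2)"])
    fix x assume x: "r \<le> x" "x \<le> R"
    have "x > 0" using tpos x by simp
    then show "(fF has_real_derivative fF1 x) (at x)" by (rule d_fF)
    show "(fF1 has_real_derivative 1 / (x * (1 + x)^2)) (at x)" using \<open>x > 0\<close> by (rule d_fF1)
    show "0 < 1 / (x * (1 + x)^2)" using \<open>x > 0\<close> by simp
  qed (simp add: g1)
  have GL: "(\<Sum>i<n. q i * (kG (p i / q i) - r^2 * mG (p i / q i))) \<ge> 0"
  proof (rule key[where h = "\<lambda>x. kG x - r^2 * mG x" and Hd = "\<lambda>x. kG1 x - r^2 * mG1 x" and Hdd = "\<lambda>x. 1 / (2 * (1 + x)) - r^2 * (1 / (2 * x^2 * (1 + x)))"])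
    fix x assume x: "r \<le> x" "x \<le> R"
    have "x > 0" using tpos x by simp
    then show "((\<lambda>x. kG x - r^2 * mG x) has_real_derivative kG1 x - r^2 * mG1 x) (at x)"
      by (intro DERIV_diff DERIV_cmult d_kG d_mG)
    show "(( \<lambda>x. kG1 x - r^2 * mG1 x) has_real_derivative 1 / (2 * (1 + x)) - r^2 * (1 / (2 * x^2 * (1 + x)))) (at x)"
      using \<open>x > 0\<close> by (intro DERIV_diff DERIV_cmult d_kG1 d_mG1)
    have "r^2 \<le> x^2" using x assms(5) by (intro power_mono) auto
    then have "r^2 * (1 / (2 * x^2 * (1 + x))) \<le> x^2 * (1 / (2 * x^2 * (1 + x)))"
      using \<open>x > 0\<close> by (intro mult_right_mono) auto
    then show "0 \<le> 1 / (2 * (1 + x)) - r^2 * (1 / (2 * x^2 * (1 + x)))" using c2[OF \<open>x > 0\<close>] by simp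
  qed (simp add: g1)
  have GU: "(\<Sum>i<n. q i * (R^2 * mG (p i / q i) - kG (p i / q i))) \<ge> 0"
  proof (rule key[where h = "\<lambda>x. R^2 * mG x - kG x" and Hd = "\<lambda>x. R^2 * mG1 x - kG1 x" and Hdd = "\<lambda>x. R^2 * (1 / (2 * x^2 * (1 + x))) - 1 / (2 * (1 + x))"])
    fix x assume x: "r \<le> x" "x \<le> R"
    have "x > 0" using tpos x by simp
    then show "((\<lambda>x. R^2 * mG x - kG x) has_real_derivative R^2 * mG1 x - kG1 x) (at x)"
      by (intro DERIV_diff DERIV_cmult d_kG d_mG)
    show "(( \<lambda>x. R^2 * mG1 x - kG1 x) has_real_derivative R^2 * (1 / (2 * x^2 * (1 + x))) - 1 / (2 * (1 + x))) (at x)"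
      using \<open>x > 0\<close> by (intro DERIV_diff DERIV_cmult d_kG1 d_mG1)
    have "x^2 \<le> R^2" using x \<open>x > 0\<close> by (intro power_mono) auto
    then have "x^2 * (1 / (2 * x^2 * (1 + x))) \<le> R^2 * (1 / (2 * x^2 * (1 + x)))"
      using \<open>x > 0\<close> by (intro mult_right_mono) auto
    then show "0 \<le> R^2 * (1 / (2 * x^2 * (1 + x))) - 1 / (2 * (1 + x))" using c2[OF \<open>x > 0\<close>] by simp
  qed (simp add: g1)
  have GP: "(\<Sum>i<n. q i * mG (p i / q i)) > 0"
  proof (rule keys[where h = "mG" and Hd = mG1 and Hdd = "\<lambda>x. 1 / (2 * x^2 * (1 + x))"])
    fix x assume x: "r \<le> x" "x \<le> R"
    have "x > 0" using tpos x by simp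
    then show "(mG has_real_derivative mG1 x) (at x)" by (rule d_mG)
    show "(mG1 has_real_derivative 1 / (2 * x^2 * (1 + x))) (at x)" using \<open>x > 0\<close> by (rule d_mG1)
    show "0 < 1 / (2 * x^2 * (1 + x))" using \<open>x > 0\<close> by simp
  qed (simp add: g1)
  define A where "A = relJS n q p"
  define B where "B = relJS n p q"
  define C where "C = relAG n q p"
  define D where "D = relAG n p q"
  have B0: "B > 0" using FP BF B_def by simp
  have D0: "D > 0" using GP BG D_def by simp
  have "A - r * B \<ge> 0" using FL unfolding A_def B_def AF BF
    by (simp add: algebra_simps sum_subtractf sum_distrib_left)
  then have 1: "r \<le> A / B" using B0 by (simp add: pos_le_divide_eq)
  have "R * B - A \<ge> 0" using FU unfolding A_def B_def AF BF
    by (simp add: algebra_simps sum_subtractf sum_distrib_left)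
  then have 2: "A / B \<le> R" using B0 by (simp add: pos_divide_le_eq)
  have "C - r^2 * D \<ge> 0" using GL unfolding C_def D_def AG BG
    by (simp add: algebra_simps sum_subtractf sum_distrib_left)
  then have "r^2 \<le> C / D" using D0 by (simp add: pos_le_divide_eq)
  then have 3: "r \<le> sqrt (C / D)" using assms(5) real_le_rsqrt by blast
  have "R^2 * D - C \<ge> 0" using GU unfolding C_def D_def AG BG
    by (simp add: algebra_simps sum_subtractf sum_distrib_left)
  then have "C / D \<le> R^2" using D0 by (simp add: pos_divide_le_eq)
  then have 4: "sqrt (C / D) \<le> R" using assms(5,6) real_sqrt_le_iff
    by (metis real_sqrt_le_mono real_sqrt_unique order_trans less_imp_le)
  show ?thesis using 1 2 3 4 unfolding A_def B_def C_def D_def by blast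
qed

end
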